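(* Let $b>1$ be an integer and let $H$ be a generalized $b$-happy function with digit mean $\mu$ and digit standard deviation $\sigma$. There exists $N$ such that for every $n>N$ and every $n$-strict interval $I$ there exists $m\in\mathbb{N}$ with $$\left[\mu m-\sigma m^{5/8},\ \mu m+\sigma m^{5/8}\right]\subseteq I.$$
   Context: A generalized $b$-happy function: fix an integer $b>1$ and non-negative integers $h(0),\dots,h(b-1)$ with $h(0)=0$, $h(1)=1$; for $n=\sum_{i=0}^k a_ib^i$ in base $b$, $H(n)=\sum_{i=0}^k h(a_i)$. Digit mean $\mu=\frac1b\sum_{j=0}^{b-1}h(j)$, digit variance $\sigma^2=\frac1b\sum_{j=0}^{b-1}(h(j)-\mu)^2$. An integer interval $[a,c]$ ($a,c$ real) is the set of integers $x$ with $a\le x\le c$; $|I|$ is its cardinality. For a positive integer $n$, an integer interval $I$ is $n$-strict if $I\subseteq[b^{n-1},b^n-1]$ and $|I|=b^{3n/4}$. *)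

theory Defs
  imports Complex_Main
begin

definition happy_weights :: "nat \<Rightarrow> (nat \<Rightarrow> nat) \<Rightarrow> bool" where
  "happy_weights b h \<longleftrightarrow> b > 1 \<and> h 0 = 0 \<and> h 1 = 1"

fun happyH :: "nat \<Rightarrow> (nat \<Rightarrow> nat) \<Rightarrow> nat \<Rightarrow> nat" where
  "happyH b h n = (if n = 0 \<or> b \<le> 1 then h n else h (n mod b) + happyH b h (n div b))"

definition digit_mean :: "nat \<Rightarrow> (nat \<Rightarrow> nat) \<Rightarrow> real" where
  "digit_mean b h = (\<Sum>j<b. real (h j)) / real b"

definition digit_var :: "nat \<Rightarrow> (nat \<Rightarrow> nat) \<Rightarrow> real" where
  "digit_var b h = (\<Sum>j<b. (real (h j) - digit_mean b h)^2) / real b"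

definition digit_sd :: "nat \<Rightarrow> (nat \<Rightarrow> nat) \<Rightarrow> real" where
  "digit_sd b h = sqrt (digit_var b h)"

definition int_interval :: "real \<Rightarrow> real \<Rightarrow> int set" where
  "int_interval a c = {x::int. a \<le> real_of_int x \<and> real_of_int x \<le> c}"

definition is_int_interval :: "int set \<Rightarrow> bool" where
  "is_int_interval I \<longleftrightarrow> (\<exists>a c. I = int_interval a c)"

definition n_strict :: "nat \<Rightarrow> nat \<Rightarrow> int set \<Rightarrow> bool" where
  "n_strict b n I \<longleftrightarrow> is_int_interval I \<and>
     I \<subseteq> {int b ^ (n - 1) .. int b ^ n - 1} \<and>
     real (card I) = real b powr (3 * real n / 4)"

end

theory Submission
  imports Defs
begin

lemma int_interval_card:
  assumes "is_int_interval I" "finite I" "I \<noteq> {}"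
  shows "I = {Min I .. Min I + int (card I) - 1}"
proof -
  obtain a c where I: "I = int_interval a c" using assms(1) unfolding is_int_interval_def by blast
  have sub1: "{Min I .. Max I} \<subseteq> I"
  proof
    fix z assume z: "z \<in> {Min I .. Max I}"
    have "Min I \<in> I" "Max I \<in> I" using assms by auto
    hence "a \<le> real_of_int (Min I)" "real_of_int (Max I) \<le> c" using I unfolding int_interval_def by auto
    moreover have "real_of_int (Min I) \<le> real_of_int z" "real_of_int z \<le> real_of_int (Max I)" using z by auto
    ultimately show "z \<in> I" using I unfolding int_interval_def by auto
  qed
  have sub2: "I \<subseteq> {Min I .. Max I}" using assms by auto
  have eq: "I = {Min I .. Max I}" using sub1 sub2 by blast
  have "card I = nat (Max I + 1 - Min I)" by (subst eq) simp
  moreover have "Min I \<le> Max I" using assms by auto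
  ultimately have "Max I = Min I + int (card I) - 1" by auto
  with eq show ?thesis by simp
qed

theorem lemma4p2:
  fixes b :: nat and h :: "nat \<Rightarrow> nat"
  assumes "b > 1" and "h 0 = 0" and "h 1 = 1"
  shows "\<exists>N::nat. \<forall>n>N. \<forall>I. n_strict b n I \<longrightarrow>
    (\<exists>m::nat. int_interval (digit_mean b h * real m - digit_sd b h * real m powr (5/8))
                            (digit_mean b h * real m + digit_sd b h * real m powr (5/8)) \<subseteq> I)"
proof -
  define \<mu> where "\<mu> = digit_mean b h"
  define \<sigma> where "\<sigma> = digit_sd b h"
  have bpos: "real b \<ge> 2" using assms(1) by simp
  have "real (h 1) \<le> (\<Sum>j<b. real (h j))"
    by (rule member_le_sum) (use assms(1) in auto)
  hence mu_ge: "\<mu> \<ge> 1 / real b" using assms(1,3) unfolding \<mu>_def digit_mean_def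
    by (simp add: divide_right_mono)
  have mupos: "\<mu> > 0" using mu_ge bpos by (smt (verit) divide_pos_pos)
  have sig: "\<sigma> \<ge> 0" unfolding \<sigma>_def digit_sd_def digit_var_def
    by (auto intro!: sum_nonneg divide_nonneg_nonneg)
  define K where "K = 2 * \<sigma> * real b powr (5/4) + 2 * \<mu> + 3"
  obtain k :: nat where k: "K \<le> 2 ^ k" using real_arch_pow[of 2 K] by (auto intro: less_imp_le)
  show ?thesis
  proof (rule exI[of _ "8 * k"], intro allI impI)
    fix n :: nat and I assume n: "n > 8 * k" and st: "n_strict b n I"
    define x where "x = real b powr (real n / 8)"
    have xpos: "x > 0" unfolding x_def using bpos by simp
    have "real b powr (real n / 8) \<ge> real b powr real k"
      by (rule powr_mono) (use n bpos in auto)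
    hence "x \<ge> real b ^ k" unfolding x_def using bpos by (simp add: powr_realpow)
    moreover have "real b ^ k \<ge> 2 ^ k" using bpos by (simp add: power_mono)
    ultimately have xK: "x \<ge> K" using k by linarith
    have x1: "x \<ge> 1" using xK sig mupos unfolding K_def
      by (smt (verit) mult_nonneg_nonneg powr_ge_zero)
    define L where "L = real (card I)"
    have L: "L = x ^ 6" unfolding L_def x_def using st bpos unfolding n_strict_def
      by (simp add: powr_realpow[symmetric] powr_powr)
    have Lpos: "L > 0" using L xpos by simp
    hence fin: "finite I" and ne: "I \<noteq> {}" unfolding L_def using card.infinite by fastforce+
    have Ieq: "I = {Min I .. Min I + int (card I) - 1}"
      using int_interval_card st fin ne unfolding n_strict_def by blast
    define A where "A = Min I"
    have AI: "A \<in> I" unfolding A_def using fin ne by simp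
    hence Arange: "int b ^ (n - 1) \<le> A" "A \<le> int b ^ n - 1" using st unfolding n_strict_def by auto
    have Apos: "real_of_int A \<ge> 0" using Arange(1) by (smt (verit) of_int_0_le_iff zero_le_power of_nat_0_le_iff)
    have Abn: "real_of_int A \<le> real b ^ n" using Arange(2)
      by (smt (verit) of_int_le_iff of_int_of_nat_eq of_int_power)
    have cardsub: "card I \<le> card {int b ^ (n - 1) .. int b ^ n - 1}"
      using st unfolding n_strict_def by (intro card_mono) auto
    have "card {int b ^ (n - 1) .. int b ^ n - 1} \<le> b ^ n"
    proof -
      have "card {int b ^ (n - 1) .. int b ^ n - 1} \<le> card {0 .. int b ^ n - 1}"
        by (rule card_mono) auto
      also have "\<dots> = b ^ n" by (simp flip: of_nat_power)
      finally show ?thesis .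
    qed
    hence Lbn: "L \<le> real b ^ n" unfolding L_def using cardsub
      by (metis le_trans of_nat_le_iff of_nat_power)
    define t where "t = (real_of_int A + L / 2) / \<mu>"
    have tpos: "t \<ge> 0" unfolding t_def using Apos Lpos mupos by simp
    define m where "m = nat \<lfloor>t\<rfloor>"
    have mreal: "real m = of_int \<lfloor>t\<rfloor>" unfolding m_def using tpos by simp
    have mt: "real m \<le> t" "real m > t - 1" using mreal by linarith+
    have mu1: "\<mu> * real m \<le> real_of_int A + L / 2"
      using mult_left_mono[OF mt(1), of \<mu>] mupos unfolding t_def by simp
    have mu2: "\<mu> * real m > real_of_int A + L / 2 - \<mu>"
    proof -
      have "\<mu> * t = real_of_int A + L / 2" unfolding t_def using mupos by simp
      thus ?thesis using mult_strict_left_mono[OF mt(2) mupos] by (simp add: right_diff_distrib)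
    qed
    have "t \<le> (2 * real b ^ n) * real b"
    proof -
      have "real_of_int A + L / 2 \<le> 2 * real b ^ n" using Abn Lbn Lpos by simp
      moreover have "1 / \<mu> \<le> real b" using mu_ge mupos bpos
        by (simp add: field_simps)
      ultimately have "(real_of_int A + L / 2) * (1 / \<mu>) \<le> (2 * real b ^ n) * real b"
        by (rule mult_mono) (use Apos Lpos mupos in auto)
      thus ?thesis unfolding t_def by simp
    qed
    also have "\<dots> \<le> real b ^ (n + 2)" using bpos by (simp add: power_add power2_eq_square mult_right_mono)
    finally have mb: "real m \<le> real b ^ (n + 2)" using mt by linarith
    have "real m powr (5/8) \<le> (real b ^ (n + 2)) powr (5/8)"
      by (rule powr_mono2) (use mb in auto)
    also have "\<dots> = (real b powr real (n + 2)) powr (5/8)"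
      using bpos by (subst powr_realpow) auto
    also have "\<dots> = real b powr (real n / 8 * 5 + 5/4)"
      unfolding powr_powr by (rule arg_cong[where f="\<lambda>e. real b powr e"]) simp
    also have "\<dots> = (real b powr (real n / 8)) powr 5 * real b powr (5/4)"
      by (simp add: powr_add powr_powr)
    also have "\<dots> = x ^ 5 * real b powr (5/4)"
      unfolding x_def by (subst powr_numeral) auto
    finally have mp: "real m powr (5/8) \<le> x ^ 5 * real b powr (5/4)" .
    have key: "\<sigma> * real m powr (5/8) + \<mu> + 1 \<le> L / 2"
    proof -
      define P where "P = x ^ 5"
      define Q where "Q = \<sigma> * (P * real b powr (5/4))"
      define R where "R = \<sigma> * real m powr (5/8)"
      have a: "R \<le> Q" unfolding R_def Q_def P_def
        using mp sig by (simp add: mult_left_mono)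
      have P0: "P \<ge> 0" unfolding P_def using xpos by simp
      have P1: "P \<ge> 1" unfolding P_def using x1 by (simp add: one_le_power)
      have "\<mu> * 1 \<le> \<mu> * P" using P1 mupos by (intro mult_left_mono) auto
      hence c: "\<mu> + 1 \<le> \<mu> * P + P" using P1 by simp
      have d: "P * K \<le> P * x" using xK P0 by (simp add: mult_left_mono)
      have e: "P * K = 2 * Q + 2 * (\<mu> * P) + 3 * P" unfolding K_def Q_def by (simp add: algebra_simps)
      have f: "L = P * x" unfolding L P_def by (simp add: power_Suc2[symmetric])
      show ?thesis unfolding R_def[symmetric] using a c d e f P0 by linarith
    qed
    show "\<exists>m::nat. int_interval (digit_mean b h * real m - digit_sd b h * real m powr (5/8))
                            (digit_mean b h * real m + digit_sd b h * real m powr (5/8)) \<subseteq> I"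
    proof (rule exI[of _ m], rule subsetI)
      fix z assume "z \<in> int_interval (digit_mean b h * real m - digit_sd b h * real m powr (5/8))
                            (digit_mean b h * real m + digit_sd b h * real m powr (5/8))"
      hence z: "\<mu> * real m - \<sigma> * real m powr (5/8) \<le> real_of_int z"
               "real_of_int z \<le> \<mu> * real m + \<sigma> * real m powr (5/8)"
        unfolding int_interval_def \<mu>_def \<sigma>_def by auto
      have "real_of_int A \<le> real_of_int z" using z mu2 key by linarith
      moreover have "real_of_int z \<le> real_of_int A + L - 1" using z mu1 key mupos by linarith
      ultimately have "A \<le> z" "z \<le> A + int (card I) - 1" unfolding L_def by linarith+
      thus "z \<in> I" using Ieq unfolding A_def by auto
    qed
  qed
qed

end
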